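(* Let $X$ be a Banach space, $D\subset X$ a closed, bounded and convex set, and $\tau$ a locally convex topology on $D$ containing the relative weak topology of $D$. Suppose $D$ is $\tau$-strongly regular. Let $C$ be a nonempty convex subset of $D$. Then for every $\varepsilon>0$ and every nonempty set $O\in\tau|_C$ there exist $n\in\mathbb{N}$ and nonempty sets $O_1,\dots,O_n\in\tau|_C$ with $O_i\subset O$ for all $i$, such that $$\operatorname{diam}\Big(\sum_{i=1}^n\tfrac{1}{n}O_i\Big)<\varepsilon.$$
   Context: For $C\subset D$, $\tau|_C$ denotes the topology induced by $\tau$ on $C$. A topology is locally convex if it has a basis of convex open sets. $D$ is called $\tau$-strongly regular if for every bounded convex subset $C$ of $D$ and every $\varepsilon>0$ there is a convex combination $\sum_i\lambda_iU_i$ of nonempty $\tau|_C$-open sets $U_i$ with diameter less than $\varepsilon$. Sums of sets are Minkowski sums: $\sum_i\lambda_iU_i=\{\sum_i\lambda_iu_i: u_i\in U_i\}$. *)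

theory Defs
  imports "HOL-Analysis.Analysis"
begin

definition weak_topology :: "'a::real_normed_vector topology" where
  "weak_topology = topology_generated_by
     {f -` U | (f :: 'a \<Rightarrow> real) U. bounded_linear f \<and> open U}"

definition locally_convex_top :: "'a::real_vector topology \<Rightarrow> bool" where
  "locally_convex_top T \<longleftrightarrow>
     (\<forall>U x. openin T U \<and> x \<in> U \<longrightarrow> (\<exists>V. openin T V \<and> convex V \<and> x \<in> V \<and> V \<subseteq> U))"

definition msum :: "(nat \<Rightarrow> real) \<Rightarrow> (nat \<Rightarrow> 'a::real_vector set) \<Rightarrow> nat \<Rightarrow> 'a set" where
  "msum lam U n = {\<Sum>i<n. lam i *\<^sub>R u i | u. \<forall>i<n. u i \<in> U i}"

definition strongly_regular :: "'a::real_normed_vector topology \<Rightarrow> 'a set \<Rightarrow> bool" where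
  "strongly_regular T D \<longleftrightarrow>
     (\<forall>C \<epsilon>. C \<subseteq> D \<and> C \<noteq> {} \<and> bounded C \<and> convex C \<and> \<epsilon> > 0 \<longrightarrow>
        (\<exists>n lam U. n \<ge> 1 \<and> (\<forall>i<n. lam i \<ge> 0) \<and> (\<Sum>i<n. lam i) = 1 \<and>
           (\<forall>i<n. U i \<noteq> {} \<and> openin (subtopology T C) (U i)) \<and>
           diameter (msum lam U n) < \<epsilon>))"

end

theory Submission
  imports Defs
begin

lemma hull_dist:
  fixes S :: "'a::real_normed_vector set"
  assumes "bounded S" "p \<in> convex hull S" "q \<in> convex hull S"
  shows "norm (p - q) \<le> diameter S"
proof -
  let ?d = "diameter S"
  have "convex hull S \<subseteq> cball s ?d" if "s \<in> S" for s
  proof (rule hull_minimal)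
    show "S \<subseteq> cball s ?d" using diameter_bounded_bound[OF assms(1) that] by auto
  qed (rule convex_cball)
  then have "S \<subseteq> cball p ?d" using assms(2) by (force simp: dist_commute subset_iff)
  then have "convex hull S \<subseteq> cball p ?d" by (intro hull_minimal) auto
  then show ?thesis using assms(3) by (auto simp: dist_norm)
qed

lemma conv_msum:
  assumes "\<forall>i<m. a i \<in> convex hull (U i)"
  shows "(\<Sum>i<m. lam i *\<^sub>R a i) \<in> convex hull (msum lam U m)"
  using assms
proof (induction m)
  case 0
  then show ?case by (simp add: msum_def hull_inc)
next
  case (Suc m)
  let ?S = "msum lam U m" and ?T = "(\<lambda>x. lam m *\<^sub>R x) ` U m"
  have sub: "?S + ?T \<subseteq> msum lam U (Suc m)"
  proof
    fix z assume "z \<in> ?S + ?T"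
    then obtain u v where u: "\<forall>i<m. u i \<in> U i" and v: "v \<in> U m"
      and z: "z = (\<Sum>i<m. lam i *\<^sub>R u i) + lam m *\<^sub>R v"
      by (auto simp: set_plus_def msum_def)
    define u' where "u' = u(m := v)"
    have "(\<Sum>i<m. lam i *\<^sub>R u' i) = (\<Sum>i<m. lam i *\<^sub>R u i)"
      by (rule sum.cong) (auto simp: u'_def)
    then have "z = (\<Sum>i<Suc m. lam i *\<^sub>R u' i)" using z by (simp add: u'_def)
    moreover have "\<forall>i<Suc m. u' i \<in> U i" using u v by (auto simp: u'_def less_Suc_eq)
    ultimately show "z \<in> msum lam U (Suc m)" unfolding msum_def by blast
  qed
  have "(\<Sum>i<m. lam i *\<^sub>R a i) \<in> convex hull ?S" using Suc by auto
  moreover have "lam m *\<^sub>R a m \<in> convex hull ?T"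
  proof -
    have "a m \<in> convex hull U m" using Suc.prems by simp
    then show ?thesis unfolding convex_hull_scaling by (rule imageI)
  qed
  ultimately have "(\<Sum>i<m. lam i *\<^sub>R a i) + lam m *\<^sub>R a m \<in> convex hull (?S + ?T)"
    by (simp add: convex_hull_set_plus set_plus_intro)
  then show ?case using hull_mono[OF sub] by auto
qed

lemma assign:
  "\<exists>\<sigma>::nat\<Rightarrow>nat. (\<forall>j<(\<Sum>i<m. k i). \<sigma> j < m) \<and>
      (\<forall>i<m. card {j. j < (\<Sum>i<m. k i) \<and> \<sigma> j = i} = k i)"
proof (induction m)
  case 0
  then show ?case by auto
next
  case (Suc m)
  then obtain \<sigma> where s1: "\<forall>j<(\<Sum>i<m. k i). \<sigma> j < m"
    and s2: "\<forall>i<m. card {j. j < (\<Sum>i<m. k i) \<and> \<sigma> j = i} = k i" by blast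
  define S where "S = (\<Sum>i<m. k i)"
  define \<sigma>' where "\<sigma>' j = (if j < S then \<sigma> j else m)" for j
  have "\<forall>j<S + k m. \<sigma>' j < Suc m" using s1 by (auto simp: \<sigma>'_def S_def)
  moreover have "card {j. j < S + k m \<and> \<sigma>' j = i} = k i" if "i < Suc m" for i
  proof (cases "i = m")
    case True
    have "{j. j < S + k m \<and> \<sigma>' j = i} = {S..<S + k m}"
      using s1 True by (auto simp: \<sigma>'_def S_def not_less)
    then show ?thesis using True by simp
  next
    case False
    then have "i < m" using that by auto
    have "{j. j < S + k m \<and> \<sigma>' j = i} = {j. j < S \<and> \<sigma> j = i}"
      using False by (auto simp: \<sigma>'_def)
    then show ?thesis using s2 \<open>i < m\<close> by (simp add: S_def)
  qed
  ultimately show ?case by (auto simp: S_def)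
qed

lemma group_avg:
  fixes U :: "nat \<Rightarrow> 'a::real_normed_vector set"
  assumes "\<forall>j<K. \<sigma> j < m" "\<forall>i<m. card {j. j<K \<and> \<sigma> j = i} = k i"
    "\<forall>i<m. U i \<noteq> {}" "\<forall>j<K. u j \<in> U (\<sigma> j)"
  shows "\<exists>a. (\<forall>i<m. a i \<in> convex hull (U i)) \<and>
     (\<Sum>j<K. (1 / real K) *\<^sub>R u j) = (\<Sum>i<m. (real (k i) / real K) *\<^sub>R a i)"
proof -
  define F where "F i = {j. j<K \<and> \<sigma> j = i}" for i
  have finF: "finite (F i)" for i by (auto simp: F_def)
  define a where "a i = (if k i = 0 then (SOME u. u \<in> U i)
     else (\<Sum>j\<in>F i. (1 / real (k i)) *\<^sub>R u j))" for i
  have A: "a i \<in> convex hull (U i)" if "i < m" for i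
  proof (cases "k i = 0")
    case True
    then show ?thesis using assms(3) that
      by (simp add: a_def) (metis hull_inc some_in_eq)
  next
    case False
    have "(\<Sum>j\<in>F i. (1 / real (k i)) *\<^sub>R u j) \<in> convex hull (U i)"
    proof (rule convex_sum[OF finF convex_convex_hull])
      show "(\<Sum>j\<in>F i. 1 / real (k i)) = 1" using assms(2) that False by (simp add: F_def)
      show "\<And>j. j \<in> F i \<Longrightarrow> u j \<in> convex hull U i"
        using assms(4) by (auto simp: F_def intro: hull_inc)
    qed auto
    then show ?thesis using False by (simp add: a_def)
  qed
  have B: "(\<Sum>j\<in>F i. (1 / real K) *\<^sub>R u j) = (real (k i) / real K) *\<^sub>R a i" if "i < m" for i
  proof (cases "k i = 0")
    case True
    then have "F i = {}" using assms(2) that finF[of i] by (metis F_def card_0_eq)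
    then show ?thesis using True by simp
  next
    case False
    have "(real (k i) / real K) *\<^sub>R a i = (\<Sum>j\<in>F i. (real (k i) / real K) *\<^sub>R ((1 / real (k i)) *\<^sub>R u j))"
      using False by (simp add: a_def scaleR_sum_right)
    also have "\<dots> = (\<Sum>j\<in>F i. (1 / real K) *\<^sub>R u j)"
      using False by (intro sum.cong) auto
    finally show ?thesis by simp
  qed
  have "(\<Sum>j<K. (1 / real K) *\<^sub>R u j) = (\<Sum>i<m. \<Sum>j\<in>F i. (1 / real K) *\<^sub>R u j)"
    using sum.group[of "{..<K}" "{..<m}" \<sigma> "\<lambda>j. (1 / real K) *\<^sub>R u j"] assms(1)
    by (force simp: F_def image_subset_iff)
  also have "\<dots> = (\<Sum>i<m. (real (k i) / real K) *\<^sub>R a i)"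
    using B by (intro sum.cong) auto
  finally show ?thesis using A by blast
qed


lemma key:
  fixes U :: "nat \<Rightarrow> 'a::real_normed_vector set"
  assumes K: "K \<ge> 1" and s1: "\<forall>j<K. \<sigma> j < m"
    and s2: "\<forall>i<m. card {j. j<K \<and> \<sigma> j = i} = k i"
    and ne: "\<forall>i<m. U i \<noteq> {}" and M: "\<forall>i<m. U i \<subseteq> cball 0 M"
    and bd: "bounded (msum lam U m)"
  shows "diameter (msum (\<lambda>_. 1 / real K) (\<lambda>j. U (\<sigma> j)) K)
     \<le> diameter (msum lam U m) + 2 * M * (\<Sum>i<m. \<bar>real (k i) / real K - lam i\<bar>)"
proof (rule diameter_le)
  let ?S = "msum (\<lambda>_. 1 / real K) (\<lambda>j. U (\<sigma> j)) K"
  define w where "w j = (SOME x. x \<in> U (\<sigma> j))" for j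
  have "\<forall>j<K. w j \<in> U (\<sigma> j)" using ne s1 unfolding w_def by (metis some_in_eq)
  then show "?S \<noteq> {} \<or> 0 \<le> diameter (msum lam U m) + 2 * M * (\<Sum>i<m. \<bar>real (k i) / real K - lam i\<bar>)"
    unfolding msum_def by blast
  fix x y assume x: "x \<in> ?S" and y: "y \<in> ?S"
  obtain u where xu: "x = (\<Sum>j<K. (1 / real K) *\<^sub>R u j)" and u: "\<forall>j<K. u j \<in> U (\<sigma> j)"
    using x unfolding msum_def by blast
  obtain v where yv: "y = (\<Sum>j<K. (1 / real K) *\<^sub>R v j)" and v: "\<forall>j<K. v j \<in> U (\<sigma> j)"
    using y unfolding msum_def by blast
  obtain a where a: "\<forall>i<m. a i \<in> convex hull (U i)"
    and xa: "x = (\<Sum>i<m. (real (k i) / real K) *\<^sub>R a i)"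
    using group_avg[OF s1 s2 ne u] xu by blast
  obtain b where b: "\<forall>i<m. b i \<in> convex hull (U i)"
    and yb: "y = (\<Sum>i<m. (real (k i) / real K) *\<^sub>R b i)"
    using group_avg[OF s1 s2 ne v] yv by blast
  define \<mu> where "\<mu> i = real (k i) / real K" for i
  have eq: "x - y = ((\<Sum>i<m. lam i *\<^sub>R a i) - (\<Sum>i<m. lam i *\<^sub>R b i))
      + (\<Sum>i<m. (\<mu> i - lam i) *\<^sub>R (a i - b i))"
    unfolding xa yb \<mu>_def
    by (simp add: sum_subtractf scaleR_diff_left scaleR_diff_right sum.distrib algebra_simps)
  have n1: "norm ((\<Sum>i<m. lam i *\<^sub>R a i) - (\<Sum>i<m. lam i *\<^sub>R b i)) \<le> diameter (msum lam U m)"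
    using hull_dist[OF bd conv_msum[OF a] conv_msum[OF b]] .
  have ab: "norm (a i - b i) \<le> 2 * M" if "i < m" for i
  proof -
    have "convex hull (U i) \<subseteq> cball 0 M" using M that by (intro hull_minimal) auto
    then have "norm (a i) \<le> M" "norm (b i) \<le> M" using a b that by auto
    then show ?thesis using norm_triangle_ineq4[of "a i" "b i"] by linarith
  qed
  have "norm (\<Sum>i<m. (\<mu> i - lam i) *\<^sub>R (a i - b i)) \<le> (\<Sum>i<m. norm ((\<mu> i - lam i) *\<^sub>R (a i - b i)))"
    by (rule norm_sum)
  also have "\<dots> \<le> (\<Sum>i<m. \<bar>\<mu> i - lam i\<bar> * (2 * M))"
    using ab by (intro sum_mono) (simp add: mult_left_mono)
  also have "\<dots> = 2 * M * (\<Sum>i<m. \<bar>real (k i) / real K - lam i\<bar>)"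
    by (simp add: \<mu>_def sum_distrib_left mult.commute)
  finally have n2: "norm (\<Sum>i<m. (\<mu> i - lam i) *\<^sub>R (a i - b i)) \<le> 2 * M * (\<Sum>i<m. \<bar>real (k i) / real K - lam i\<bar>)" .
  show "norm (x - y) \<le> diameter (msum lam U m) + 2 * M * (\<Sum>i<m. \<bar>real (k i) / real K - lam i\<bar>)"
    unfolding eq using norm_triangle_ineq[of "(\<Sum>i<m. lam i *\<^sub>R a i) - (\<Sum>i<m. lam i *\<^sub>R b i)"
      "\<Sum>i<m. (\<mu> i - lam i) *\<^sub>R (a i - b i)"] n1 n2 by linarith
qed


lemma approx:
  fixes lam :: "nat \<Rightarrow> real" and N :: nat
  assumes m: "m \<ge> 1" and l0: "\<forall>i<m. lam i \<ge> 0" and l1: "(\<Sum>i<m. lam i) = 1"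
    and N: "real N > real m"
  shows "(\<Sum>i<m. nat \<lfloor>real N * lam i\<rfloor>) \<ge> 1 \<and>
    (\<Sum>i<m. \<bar>real (nat \<lfloor>real N * lam i\<rfloor>) / real (\<Sum>i<m. nat \<lfloor>real N * lam i\<rfloor>) - lam i\<bar>)
      \<le> 2 * real m / real N"
proof -
  define k where "k i = nat \<lfloor>real N * lam i\<rfloor>" for i
  define K where "K = (\<Sum>i<m. k i)"
  have rk: "real (k i) = of_int \<lfloor>real N * lam i\<rfloor>" if "i < m" for i
    using l0 that by (simp add: k_def)
  have lo: "real (k i) \<le> real N * lam i" and hi: "real N * lam i < real (k i) + 1" if "i < m" for i
    using rk[OF that] by linarith+
  have Npos: "real N > 0" using N m by linarith
  have rK: "real K = (\<Sum>i<m. real (k i))" by (simp add: K_def)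
  have "(\<Sum>i<m. real N * lam i - 1) < (\<Sum>i<m. real (k i))"
  proof (rule sum_strict_mono)
    show "{..<m} \<noteq> {}" using m by (auto simp: lessThan_empty_iff)
    fix i assume "i \<in> {..<m}" then show "real N * lam i - 1 < real (k i)" using hi[of i] by auto
  qed auto
  then have Kgt: "real K > real N - real m" using l1 rK by (simp add: sum_subtractf sum_distrib_left[symmetric])
  have "(\<Sum>i<m. real (k i)) \<le> (\<Sum>i<m. real N * lam i)" using lo by (intro sum_mono) auto
  then have KN: "real K \<le> real N" using l1 rK by (simp add: sum_distrib_left[symmetric])
  have Kpos: "real K > 0" using Kgt N by linarith
  then have K1: "K \<ge> 1" by simp
  have trm: "\<bar>real (k i) / real K - lam i\<bar> \<le> (real (k i) / real K - real (k i) / real N) + (lam i - real (k i) / real N)"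
    if "i < m" for i
  proof -
    have "real (k i) / real N \<le> real (k i) / real K"
      using KN Kpos by (intro divide_left_mono) auto
    moreover have "real (k i) / real N \<le> lam i" using lo[OF that] Npos by (simp add: divide_le_eq mult.commute)
    ultimately show ?thesis by linarith
  qed
  have "(\<Sum>i<m. \<bar>real (k i) / real K - lam i\<bar>) \<le>
     (\<Sum>i<m. (real (k i) / real K - real (k i) / real N) + (lam i - real (k i) / real N))"
    using trm by (intro sum_mono) auto
  also have "\<dots> = real K / real K - real K / real N + 1 - real K / real N"
    using l1 rK by (simp add: sum.distrib sum_subtractf sum_divide_distrib[symmetric] sum_distrib_left[symmetric])
  also have "\<dots> = 2 * (real N - real K) / real N" using Kpos Npos by (simp add: field_simps)
  also have "\<dots> \<le> 2 * real m / real N" using Kgt Npos by (intro divide_right_mono) auto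
  finally show ?thesis using K1 unfolding K_def k_def by simp
qed


theorem lemma2p2:
  fixes D C :: "'a::banach set" and \<tau> :: "'a topology"
  assumes "closed D" and "bounded D" and "convex D"
    and "topspace \<tau> = D"
    and "locally_convex_top \<tau>"
    and "\<And>U. openin (subtopology weak_topology D) U \<Longrightarrow> openin \<tau> U"
    and "strongly_regular \<tau> D"
    and "C \<noteq> {}" and "convex C" and "C \<subseteq> D"
  shows "\<forall>\<epsilon>>0. \<forall>W. W \<noteq> {} \<and> openin (subtopology \<tau> C) W \<longrightarrow>
           (\<exists>n::nat. \<exists>Os. n \<ge> 1 \<and>
              (\<forall>i<n. Os i \<noteq> {} \<and> openin (subtopology \<tau> C) (Os i) \<and> Os i \<subseteq> W) \<and>
              diameter (msum (\<lambda>_. 1 / real n) Os n) < \<epsilon>)"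
proof (intro allI impI)
  fix \<epsilon> :: real and W
  assume e: "\<epsilon> > 0" and W: "W \<noteq> {} \<and> openin (subtopology \<tau> C) W"
  obtain V where V: "openin \<tau> V" and WV: "W = V \<inter> C"
    using W by (auto simp: openin_subtopology)
  obtain x where x: "x \<in> W" using W by blast
  obtain V' where V': "openin \<tau> V'" "convex V'" "x \<in> V'" "V' \<subseteq> V"
    using assms(5) V x WV unfolding locally_convex_top_def by blast
  define C' where "C' = V' \<inter> C"
  have V'D: "V' \<subseteq> D" using openin_subset[OF V'(1)] assms(4) by simp
  have C'D: "C' \<subseteq> D" using V'D by (auto simp: C'_def)
  have C'ne: "C' \<noteq> {}" using x WV V' by (auto simp: C'_def)
  have C'b: "bounded C'" using C'D assms(2) bounded_subset by blast
  have C'c: "convex C'" using V'(2) assms(9) by (simp add: C'_def convex_Int)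
  obtain m lam U where m: "m \<ge> 1" and l0: "\<forall>i<m. lam i \<ge> 0" and l1: "(\<Sum>i<m. lam i) = 1"
    and U: "\<forall>i<m. U i \<noteq> {} \<and> openin (subtopology \<tau> C') (U i)"
    and dU: "diameter (msum lam U m) < \<epsilon> / 2"
    using assms(7)[unfolded strongly_regular_def, rule_format, of C' "\<epsilon> / 2"] C'D C'ne C'b C'c e
    by auto
  obtain M where M: "M > 0" "\<forall>z\<in>D. norm z \<le> M" using assms(2) bounded_pos by blast
  have UC': "U i \<subseteq> C'" if "i < m" for i
    using openin_subset[of "subtopology \<tau> C'" "U i"] U that by auto
  have UW: "U i \<subseteq> W" if "i < m" for i using UC'[OF that] V'(4) WV by (auto simp: C'_def)
  have Uo: "openin (subtopology \<tau> C) (U i)" if "i < m" for i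
  proof -
    have "openin (subtopology \<tau> C') (U i)" using U that by blast
    then obtain G where G: "openin \<tau> G" "U i = G \<inter> C'" by (auto simp: openin_subtopology)
    then have "U i = (G \<inter> V') \<inter> C" by (auto simp: C'_def)
    then show ?thesis using G(1) V'(1) by (auto simp: openin_subtopology intro: openin_Int)
  qed
  have UM: "\<forall>i<m. U i \<subseteq> cball 0 M" using UC' C'D M by (auto simp: subset_iff)
  have bd: "bounded (msum lam U m)"
  proof -
    have "norm z \<le> (\<Sum>i<m. \<bar>lam i\<bar> * M)" if zin: "z \<in> msum lam U m" for z
    proof -
      obtain u where z: "z = (\<Sum>i<m. lam i *\<^sub>R u i)" and u: "\<forall>i<m. u i \<in> U i"
        using zin unfolding msum_def by blast
      have "norm z \<le> (\<Sum>i<m. norm (lam i *\<^sub>R u i))" unfolding z by (rule norm_sum)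
      also have "\<dots> \<le> (\<Sum>i<m. \<bar>lam i\<bar> * M)"
      proof (rule sum_mono)
        fix i assume "i \<in> {..<m}"
        then have "u i \<in> cball 0 M" using u UM by blast
        then have "norm (u i) \<le> M" by simp
        then show "norm (lam i *\<^sub>R u i) \<le> \<bar>lam i\<bar> * M" by (simp add: mult_left_mono)
      qed
      finally show ?thesis .
    qed
    then show ?thesis unfolding bounded_iff by blast
  qed
  define N :: nat where "N = nat \<lceil>8 * M * real m / \<epsilon>\<rceil> + m + 1"
  have N1: "real N > real m" by (simp add: N_def)
  have N2: "real N > 8 * M * real m / \<epsilon>" unfolding N_def by linarith
  define k where "k i = nat \<lfloor>real N * lam i\<rfloor>" for i
  define K where "K = (\<Sum>i<m. k i)"
  have K1: "K \<ge> 1" and err: "(\<Sum>i<m. \<bar>real (k i) / real K - lam i\<bar>) \<le> 2 * real m / real N"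
    using approx[OF m l0 l1 N1] unfolding K_def k_def by auto
  obtain \<sigma> where s1: "\<forall>j<K. \<sigma> j < m" and s2: "\<forall>i<m. card {j. j < K \<and> \<sigma> j = i} = k i"
    using assign[of k m] unfolding K_def by blast
  have ne: "\<forall>i<m. U i \<noteq> {}" using U by blast
  have D1: "diameter (msum (\<lambda>_. 1 / real K) (\<lambda>j. U (\<sigma> j)) K)
     \<le> diameter (msum lam U m) + 2 * M * (\<Sum>i<m. \<bar>real (k i) / real K - lam i\<bar>)"
    by (rule key[OF K1 s1 s2 ne UM bd])
  have Npos: "real N > 0" using N1 by linarith
  have "2 * M * (\<Sum>i<m. \<bar>real (k i) / real K - lam i\<bar>) \<le> 2 * M * (2 * real m / real N)"
    using err M by (intro mult_left_mono) auto
  also have "\<dots> < \<epsilon> / 2"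
  proof -
    have "8 * M * real m < \<epsilon> * real N" using N2 e by (simp add: divide_less_eq mult.commute)
    then show ?thesis using Npos by (simp add: field_simps)
  qed
  finally have F1: "diameter (msum (\<lambda>_. 1 / real K) (\<lambda>j. U (\<sigma> j)) K) < \<epsilon>"
    using D1 dU by linarith
  have F2: "\<forall>j<K. U (\<sigma> j) \<noteq> {} \<and> openin (subtopology \<tau> C) (U (\<sigma> j)) \<and> U (\<sigma> j) \<subseteq> W"
    using s1 ne Uo UW by blast
  show "\<exists>n::nat. \<exists>Os. n \<ge> 1 \<and>
              (\<forall>i<n. Os i \<noteq> {} \<and> openin (subtopology \<tau> C) (Os i) \<and> Os i \<subseteq> W) \<and>
              diameter (msum (\<lambda>_. 1 / real n) Os n) < \<epsilon>"
  proof (intro exI[of _ K] exI[of _ "\<lambda>j. U (\<sigma> j)"] conjI)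
    show "1 \<le> K" by (rule K1)
  qed (rule F2 F1)+
qed

end
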